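(* Let $(C,D)$ define an irreducible MAP of order $p$ which is either an MMPP ($D$ diagonal) or an MSPP ($C$ diagonal). Then its limiting index of dispersion of counts satisfies $d^2\ge 1$; equivalently, $$\boldsymbol{\pi} D D_Q^{\sharp} D\mathbf{1}\ \ge\ 0,$$ where $D_Q^{\sharp}=\int_0^\infty (e^{Qu}-\mathbf{1}\boldsymbol{\pi})\,du$ is the deviation matrix of $Q=C+D$.
   Context: A Markovian arrival process (MAP) of order $p$ is specified by $p\times p$ real matrices $C$ and $D$ such that $D$ has nonnegative entries, $C$ has nonnegative off-diagonal entries, and $Q=C+D$ is the generator (row sums zero) of an irreducible continuous-time Markov chain on $\{1,\dots,p\}$; $C$ is assumed nonsingular. $C$ governs phase transitions without events and $D$ phase transitions accompanied by an event; $N(t)$ counts events in $[0,t]$. $\boldsymbol{\pi}$ is the stationary distribution of $Q$ ($\boldsymbol{\pi}Q=\mathbf{0}$, $\boldsymbol{\pi}\mathbf{1}=1$), $\mathbf{1}$ the all-ones column vector, and $\lambda^*=\boldsymbol{\pi}D\mathbf{1}$. Starting the phase at $\boldsymbol{\pi}$ gives the time-stationary version. The limiting index of dispersion is $d^2=\lim_{t\to\infty}\mathrm{Var}(N(t))/\mathbb{E}[N(t)]$ for the time-stationary version, and it equals $1+\frac{2}{\lambda^*}\boldsymbol{\pi}DD_Q^{\sharp}D\mathbf{1}$. An MMPP (Markov modulated Poisson process) is a MAP with $D$ diagonal; an MSPP (Markovian switched Poisson process) is a MAP with $C$ diagonal. *)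

theory Defs
  imports "HOL-Analysis.Analysis"
begin

text \<open>Matrix powers and the matrix exponential on real square matrices
  (matrix product, not the componentwise product of the vec type).\<close>

fun mpow :: "real^'n^'n \<Rightarrow> nat \<Rightarrow> real^'n^'n" where
  "mpow A 0 = mat 1"
| "mpow A (Suc k) = A ** mpow A k"

definition mexp :: "real^'n^'n \<Rightarrow> real^'n^'n" where
  "mexp A = (\<Sum>k. (1 / fact k) *\<^sub>R mpow A k)"

definition ones :: "real^'n" where
  "ones = (\<chi> i. 1)"

definition generator :: "real^'n^'n \<Rightarrow> bool" where
  "generator Q \<longleftrightarrow> (\<forall>i j. i \<noteq> j \<longrightarrow> Q $ i $ j \<ge> 0) \<and> (\<forall>i. (\<Sum>j\<in>UNIV. Q $ i $ j) = 0)"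

definition irreducible_gen :: "real^'n^'n \<Rightarrow> bool" where
  "irreducible_gen Q \<longleftrightarrow> (\<forall>i j. (i, j) \<in> {(a, b). a \<noteq> b \<and> Q $ a $ b > 0}\<^sup>*)"

definition devmat :: "real^'n^'n \<Rightarrow> real^'n \<Rightarrow> real^'n^'n" where
  "devmat Q p = integral {0..} (\<lambda>u::real. mexp (u *\<^sub>R Q) - (\<chi> i j. p $ j))"

definition is_MAP :: "real^'n^'n \<Rightarrow> real^'n^'n \<Rightarrow> bool" where
  "is_MAP C D \<longleftrightarrow> (\<forall>i j. D $ i $ j \<ge> 0) \<and> (\<forall>i j. i \<noteq> j \<longrightarrow> C $ i $ j \<ge> 0)
     \<and> generator (C + D) \<and> irreducible_gen (C + D) \<and> invertible C"

definition diagonal_mat :: "real^'n^'n \<Rightarrow> bool" where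
  "diagonal_mat A \<longleftrightarrow> (\<forall>i j. i \<noteq> j \<longrightarrow> A $ i $ j = 0)"

end

theory Submission
  imports Defs
begin

lemma vec_has_vector_derivative:
  fixes f :: "real \<Rightarrow> 'a::real_normed_vector ^ 'n"
  assumes "\<And>i. ((\<lambda>t. f t $ i) has_vector_derivative f' $ i) (at x within S)"
  shows "(f has_vector_derivative f') (at x within S)"
proof -
  have "((\<lambda>y. (1 / norm (y - x)) *\<^sub>R ((\<lambda>t. f t $ i) y - ((\<lambda>t. f t $ i) x + (y - x) *\<^sub>R f' $ i))) \<longlongrightarrow> 0) (at x within S)" for i
    using assms[of i] unfolding has_vector_derivative_def has_derivative_within by blast
  then have "((\<lambda>y. \<chi> i. (1 / norm (y - x)) *\<^sub>R (f y $ i - (f x $ i + (y - x) *\<^sub>R f' $ i))) \<longlongrightarrow> (\<chi> i. 0)) (at x within S)"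
    by (intro tendsto_vec_lambda) simp
  moreover have "(\<lambda>y. \<chi> i. (1 / norm (y - x)) *\<^sub>R (f y $ i - (f x $ i + (y - x) *\<^sub>R f' $ i)))
     = (\<lambda>y. (1 / norm (y - x)) *\<^sub>R (f y - (f x + (y - x) *\<^sub>R f')))"
    by (auto simp: vec_eq_iff)
  ultimately show ?thesis
    unfolding has_vector_derivative_def has_derivative_within
    by (auto simp: bounded_linear_scaleR_left zero_vec_def)
qed

lemma sums_vec:
  fixes f :: "nat \<Rightarrow> 'a::real_normed_vector ^ 'n"
  assumes "\<And>i. (\<lambda>k. f k $ i) sums (s $ i)"
  shows "f sums s"
proof -
  have "(\<lambda>n. \<chi> i. \<Sum>k<n. f k $ i) \<longlonglongrightarrow> (\<chi> i. s $ i)"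
    using assms unfolding sums_def by (intro tendsto_vec_lambda) auto
  moreover have "(\<lambda>n. \<chi> i. \<Sum>k<n. f k $ i) = (\<lambda>n. \<Sum>k<n. f k)"
    by (auto simp: vec_eq_iff sum_component)
  ultimately show ?thesis unfolding sums_def by simp
qed

lemma mpow_scale: "mpow (u *\<^sub>R A) k = (u ^ k) *\<^sub>R mpow A k"
  by (induction k) (auto simp: scalar_matrix_assoc matrix_scalar_ac mult.commute)

lemma mpow_Suc_right: "mpow A (Suc k) = mpow A k ** A"
  by (induction k) (auto simp: matrix_mul_assoc matrix_mul_lid matrix_mul_rid)

definition msz :: "real^'n^'n \<Rightarrow> real" where
  "msz A = (\<Sum>i\<in>UNIV. \<Sum>j\<in>UNIV. \<bar>A $ i $ j\<bar>)"

lemma msz_ge: "\<bar>A $ i $ j\<bar> \<le> msz A"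
proof -
  have "\<bar>A $ i $ j\<bar> \<le> (\<Sum>j\<in>UNIV. \<bar>A $ i $ j\<bar>)"
    by (rule member_le_sum) auto
  also have "\<dots> \<le> msz A" unfolding msz_def
    by (rule member_le_sum[where f="\<lambda>i. \<Sum>j\<in>UNIV. \<bar>A $ i $ j\<bar>"]) (auto intro: sum_nonneg)
  finally show ?thesis .
qed

lemma msz_row: "(\<Sum>l\<in>UNIV. \<bar>A $ i $ l\<bar>) \<le> msz A"
  unfolding msz_def
  by (rule member_le_sum[where f="\<lambda>i. \<Sum>j\<in>UNIV. \<bar>A $ i $ j\<bar>"]) (auto intro: sum_nonneg)

lemma msz_nonneg: "0 \<le> msz A"
  unfolding msz_def by (auto intro: sum_nonneg)

lemma mpow_bound: "\<bar>mpow A k $ i $ j\<bar> \<le> msz A ^ k"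
proof (induction k arbitrary: i j)
  case 0
  then show ?case by (auto simp: mat_def)
next
  case (Suc k)
  have "\<bar>mpow A (Suc k) $ i $ j\<bar> = \<bar>\<Sum>l\<in>UNIV. A $ i $ l * mpow A k $ l $ j\<bar>"
    by (simp add: matrix_matrix_mult_def)
  also have "\<dots> \<le> (\<Sum>l\<in>UNIV. \<bar>A $ i $ l\<bar> * msz A ^ k)"
    by (rule order_trans[OF sum_abs]) (auto intro!: sum_mono mult_left_mono simp: abs_mult Suc)
  also have "\<dots> = (\<Sum>l\<in>UNIV. \<bar>A $ i $ l\<bar>) * msz A ^ k"
    by (simp add: sum_distrib_right)
  also have "\<dots> \<le> msz A * msz A ^ k"
    by (rule mult_right_mono[OF msz_row]) (simp add: msz_nonneg)
  finally show ?case by simp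
qed

definition cf :: "real^'n^'n \<Rightarrow> 'n \<Rightarrow> 'n \<Rightarrow> nat \<Rightarrow> real" where
  "cf A i j k = mpow A k $ i $ j / fact k"

lemma cf_summable: "summable (\<lambda>k. cf A i j k * y ^ k)"
proof -
  have b: "norm (cf A i j k * y ^ k) \<le> (msz A * \<bar>y\<bar>) ^ k /\<^sub>R fact k" for k
  proof -
    have "norm (cf A i j k * y ^ k) = \<bar>mpow A k $ i $ j\<bar> * \<bar>y\<bar> ^ k / fact k"
      by (simp add: cf_def abs_mult power_abs)
    also have "\<dots> \<le> msz A ^ k * \<bar>y\<bar> ^ k / fact k"
      by (intro divide_right_mono mult_right_mono mpow_bound) auto
    finally show ?thesis
      by (simp add: power_mult_distrib divide_inverse mult.commute)
  qed
  show ?thesis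
    by (rule summable_comparison_test'[where N=0, OF summable_exp_generic b])
qed

lemma mexp_sums: "(\<lambda>k. (1 / fact k) *\<^sub>R mpow A k) sums (\<chi> i j. \<Sum>k. cf A i j k)"
proof -
  have "summable (\<lambda>k. cf A i j k)" for i j using cf_summable[of A i j 1] by simp
  then show ?thesis
    by (intro sums_vec) (simp add: cf_def summable_sums)
qed

lemma mexp_entry: "mexp A $ i $ j = (\<Sum>k. cf A i j k)"
  using mexp_sums[of A] unfolding mexp_def by (simp add: sums_iff)

lemma mexpu_entry: "mexp (u *\<^sub>R A) $ i $ j = (\<Sum>k. cf A i j k * u ^ k)"
  unfolding mexp_entry cf_def mpow_scale by (simp add: mult.commute)

lemma diffs_cf: "diffs (cf Q i j) k = (\<Sum>l\<in>UNIV. Q $ i $ l * cf Q l j k)"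
proof -
  have "diffs (cf Q i j) k = real (Suc k) * (mpow Q (Suc k) $ i $ j / fact (Suc k))"
    by (simp add: diffs_def cf_def)
  also have "\<dots> = mpow Q (Suc k) $ i $ j / fact k"
    by (simp only: fact_Suc of_nat_fact) (simp add: divide_simps del: mpow.simps)
  also have "\<dots> = (\<Sum>l\<in>UNIV. Q $ i $ l * cf Q l j k)"
    by (simp add: matrix_matrix_mult_def cf_def sum_divide_distrib)
  finally show ?thesis .
qed

lemma mexp_deriv_entry:
  "((\<lambda>t. mexp (t *\<^sub>R Q) $ i $ j) has_vector_derivative (Q ** mexp (u *\<^sub>R Q)) $ i $ j) (at u within S)"
proof -
  have d: "((\<lambda>t. \<Sum>k. cf Q i j k * t ^ k) has_field_derivative (\<Sum>k. diffs (cf Q i j) k * u ^ k)) (at u)"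
    by (rule termdiffs_strong_converges_everywhere) (rule cf_summable)
  have "(\<Sum>k. diffs (cf Q i j) k * u ^ k) = (\<Sum>k. \<Sum>l\<in>UNIV. Q $ i $ l * (cf Q l j k * u ^ k))"
    by (simp add: diffs_cf sum_distrib_right mult.assoc)
  also have "\<dots> = (\<Sum>l\<in>UNIV. \<Sum>k. Q $ i $ l * (cf Q l j k * u ^ k))"
    by (rule suminf_sum) (intro summable_mult cf_summable)
  also have "\<dots> = (\<Sum>l\<in>UNIV. Q $ i $ l * (\<Sum>k. cf Q l j k * u ^ k))"
    by (intro sum.cong refl) (simp add: suminf_mult cf_summable)
  also have "\<dots> = (Q ** mexp (u *\<^sub>R Q)) $ i $ j"
    by (simp add: matrix_matrix_mult_def mexpu_entry)
  finally have e: "(\<Sum>k. diffs (cf Q i j) k * u ^ k) = (Q ** mexp (u *\<^sub>R Q)) $ i $ j" .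
  show ?thesis
    using d unfolding e mexpu_entry[symmetric]
    by (simp add: has_real_derivative_iff_has_vector_derivative[symmetric] has_field_derivative_at_within has_vector_derivative_at_within)
qed

lemma mexp_deriv:
  "((\<lambda>t. mexp (t *\<^sub>R Q)) has_vector_derivative (Q ** mexp (u *\<^sub>R Q))) (at u within S)"
  by (intro vec_has_vector_derivative mexp_deriv_entry)

lemma vm_entry: "(x v* mexp (u *\<^sub>R Q)) $ j = (\<Sum>k. (x v* mpow Q k) $ j / fact k * u ^ k)"
proof -
  have "(x v* mexp (u *\<^sub>R Q)) $ j = (\<Sum>i\<in>UNIV. (\<Sum>k. cf Q i j k * u ^ k) * x $ i)"
    by (simp add: vector_matrix_mult_def mexpu_entry mult.commute)
  also have "\<dots> = (\<Sum>i\<in>UNIV. \<Sum>k. cf Q i j k * u ^ k * x $ i)"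
    by (intro sum.cong refl) (simp add: suminf_mult2 cf_summable)
  also have "\<dots> = (\<Sum>k. \<Sum>i\<in>UNIV. cf Q i j k * u ^ k * x $ i)"
    by (rule suminf_sum[symmetric]) (intro summable_mult2 cf_summable)
  also have "\<dots> = (\<Sum>k. (x v* mpow Q k) $ j / fact k * u ^ k)"
    by (intro suminf_cong) (simp add: vector_matrix_mult_def cf_def sum_divide_distrib sum_distrib_right sum_distrib_left mult_ac)
  finally show ?thesis .
qed

lemma mv_entry: "(mexp (u *\<^sub>R Q) *v y) $ i = (\<Sum>k. (mpow Q k *v y) $ i / fact k * u ^ k)"
proof -
  have "(mexp (u *\<^sub>R Q) *v y) $ i = (\<Sum>j\<in>UNIV. (\<Sum>k. cf Q i j k * u ^ k) * y $ j)"
    by (simp add: matrix_vector_mult_def mexpu_entry)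
  also have "\<dots> = (\<Sum>j\<in>UNIV. \<Sum>k. cf Q i j k * u ^ k * y $ j)"
    by (intro sum.cong refl) (simp add: suminf_mult2 cf_summable)
  also have "\<dots> = (\<Sum>k. \<Sum>j\<in>UNIV. cf Q i j k * u ^ k * y $ j)"
    by (rule suminf_sum[symmetric]) (intro summable_mult2 cf_summable)
  also have "\<dots> = (\<Sum>k. (mpow Q k *v y) $ i / fact k * u ^ k)"
    by (intro suminf_cong) (simp add: matrix_vector_mult_def cf_def sum_divide_distrib sum_distrib_right sum_distrib_left mult_ac)
  finally show ?thesis .
qed

lemma pi_mpow: "x v* Q = 0 \<Longrightarrow> x v* mpow Q k = (if k = 0 then x else 0)"
proof (induction k)
  case 0 then show ?case by simp
next
  case (Suc k)
  have "x v* mpow Q (Suc k) = (x v* Q) v* mpow Q k"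
    by (simp add: vector_matrix_mul_assoc)
  also have "\<dots> = 0" using Suc.prems by (simp add: vector_matrix_mult_def vec_eq_iff)
  finally show ?case by simp
qed

lemma mpow_ones: "Q *v y = 0 \<Longrightarrow> mpow Q k *v y = (if k = 0 then y else 0)"
proof (induction k)
  case 0 then show ?case by simp
next
  case (Suc k)
  have "mpow Q (Suc k) *v y = mpow Q k *v (Q *v y)"
    by (simp only: mpow_Suc_right matrix_vector_mul_assoc)
  also have "\<dots> = 0" using Suc.prems by (simp add: matrix_vector_mult_def vec_eq_iff)
  finally show ?case by simp
qed

lemma sum_first: "(\<Sum>k. (if k = 0 then a else 0) / fact k * (u::real) ^ k) = a"
proof -
  have "(\<lambda>k. (if k = 0 then a else 0) / fact k * u ^ k) = (\<lambda>k. if k = 0 then (\<lambda>_. a) k else 0)"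
    by auto
  then show ?thesis using sums_single[of 0 "\<lambda>_. a"] by (simp add: sums_iff)
qed

lemma pi_mexp: "x v* Q = 0 \<Longrightarrow> x v* mexp (u *\<^sub>R Q) = x"
proof -
  assume h: "x v* Q = 0"
  have "(x v* mexp (u *\<^sub>R Q)) $ j = x $ j" for j
  proof -
    have "(x v* mexp (u *\<^sub>R Q)) $ j = (\<Sum>k. (if k = 0 then x $ j else 0) / fact k * u ^ k)"
      unfolding vm_entry pi_mpow[OF h] by (intro suminf_cong) auto
    then show ?thesis by (simp only: sum_first)
  qed
  then show ?thesis by (simp add: vec_eq_iff)
qed

lemma mexp_ones: "Q *v y = 0 \<Longrightarrow> mexp (u *\<^sub>R Q) *v y = y"
proof -
  assume h: "Q *v y = 0"
  have "(mexp (u *\<^sub>R Q) *v y) $ j = y $ j" for j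
  proof -
    have "(mexp (u *\<^sub>R Q) *v y) $ j = (\<Sum>k. (if k = 0 then y $ j else 0) / fact k * u ^ k)"
      unfolding mv_entry mpow_ones[OF h] by (intro suminf_cong) auto
    then show ?thesis by (simp only: sum_first)
  qed
  then show ?thesis by (simp add: vec_eq_iff)
qed

lemma mexp_zero: "mexp (0 *\<^sub>R Q) = mat 1"
proof -
  have "mexp (0 *\<^sub>R Q) $ i $ j = mat 1 $ i $ j" for i j
  proof -
    have "mexp (0 *\<^sub>R Q) $ i $ j = (\<Sum>k. cf Q i j k * 0 ^ k)" by (rule mexpu_entry)
    also have "\<dots> = cf Q i j 0"
      using sums_single[of 0 "cf Q i j"] by (simp add: sums_iff power_0_left if_distrib[of "\<lambda>x. _ * x"] cong: if_cong)
    also have "\<dots> = mat 1 $ i $ j" by (simp add: cf_def)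
    finally show ?thesis .
  qed
  then show ?thesis by (simp add: vec_eq_iff)
qed

lemma bl_vm: "bounded_linear (\<lambda>X::real^'n^'n. p v* X)"
  by (rule bounded_linearI') (auto simp: vec_eq_iff vector_matrix_mult_def sum.distrib sum_distrib_left algebra_simps)

lemma bl_mv: "bounded_linear (\<lambda>X::real^'n^'n. X *v y)"
  by (rule bounded_linearI') (auto simp: vec_eq_iff matrix_vector_mult_def sum.distrib sum_distrib_left algebra_simps)

lemma bl_mm: "bounded_linear (\<lambda>X::real^'n^'n. Q ** X)"
  by (rule bounded_linearI') (auto simp: vec_eq_iff matrix_matrix_mult_def sum.distrib sum_distrib_left algebra_simps)

lemma ball_sub: "B \<le> T \<Longrightarrow> ball (0::real) B \<subseteq> cbox (-T) T"
  by (auto simp: ball_eq_greaterThanLessThan cbox_interval)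

lemma devmat_props:
  fixes Q :: "real^'n^'n" and p :: "real^'n"
  assumes Q1: "Q *v ones = 0" and pQ: "p v* Q = 0" and p1: "p \<bullet> ones = 1"
    and int: "(\<lambda>u. mexp (u *\<^sub>R Q) - (\<chi> i j. p $ j)) integrable_on {0..}"
  shows "p v* devmat Q p = 0" "devmat Q p *v ones = 0"
    "Q ** devmat Q p = (\<chi> i j. p $ j) - mat 1"
proof -
  define P :: "real^'n^'n" where "P = (\<chi> i j. p $ j)"
  define E where "E = (\<lambda>u::real. mexp (u *\<^sub>R Q))"
  define f where "f = (\<lambda>u. E u - P)"
  define M where "M = devmat Q p"
  have Mdef: "M = integral {0..} f" unfolding M_def devmat_def f_def E_def P_def ..
  have fint: "f integrable_on {0..}" using int unfolding f_def E_def P_def .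
  have pP: "p v* P = p"
    using p1 by (simp add: P_def vec_eq_iff vector_matrix_mult_def inner_vec_def ones_def
        sum_distrib_left[symmetric] mult.commute)
  have P1: "P *v ones = ones"
    using p1 by (simp add: P_def vec_eq_iff matrix_vector_mult_def inner_vec_def ones_def)
  have QP: "Q ** P = 0"
  proof -
    have "(Q ** P) $ i $ j = (Q *v ones) $ i * p $ j" for i j
      by (simp add: P_def matrix_matrix_mult_def matrix_vector_mult_def ones_def sum_distrib_right)
    then show ?thesis using Q1 by (simp add: vec_eq_iff)
  qed
  have "p v* f u = 0" for u
    using linear_diff[OF bounded_linear.linear[OF bl_vm[of p]], of "E u" P] pi_mexp[OF pQ] pP by (simp add: f_def E_def)
  then have "integral {0..} ((\<lambda>X. p v* X) \<circ> f) = 0" by (simp add: o_def)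
  then show "p v* devmat Q p = 0"
    using integral_linear[OF fint bl_vm, of p] Mdef M_def by simp
  have "f u *v ones = 0" for u
    using linear_diff[OF bounded_linear.linear[OF bl_mv[of ones]], of "E u" P] mexp_ones[OF Q1] P1 by (simp add: f_def E_def)
  then have "integral {0..} ((\<lambda>X. X *v ones) \<circ> f) = 0" by (simp add: o_def)
  then show "devmat Q p *v ones = 0"
    using integral_linear[OF fint bl_mv, of ones] Mdef M_def by simp
  define G where "G = (\<lambda>T. integral {0..T} f)"
  have fintT: "f integrable_on {a..b}" if "0 \<le> a" for a b
    by (rule integrable_on_subinterval[OF fint]) (use that in auto)
  have QG: "Q ** G T = E T - mat 1" if "0 \<le> T" for T
  proof -
    have "((\<lambda>u. Q ** E u) has_integral (E T - E 0)) {0..T}"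
      unfolding E_def by (rule fundamental_theorem_of_calculus) (use that mexp_deriv in auto)
    moreover have "Q ** f u = Q ** E u" for u
      using linear_diff[OF bounded_linear.linear[OF bl_mm[of Q]], of "E u" P] QP by (simp add: f_def)
    ultimately have "((\<lambda>u. Q ** f u) has_integral (E T - mat 1)) {0..T}"
      using mexp_zero[of Q] by (simp add: E_def)
    moreover have "((\<lambda>u. Q ** f u) has_integral Q ** G T) {0..T}"
      unfolding G_def using has_integral_linear[OF integrable_integral[OF fintT[of 0 T]] bl_mm[of Q]]
      by (simp add: o_def)
    ultimately show ?thesis using has_integral_unique by blast
  qed
  have Glim: "\<exists>B. \<forall>T\<ge>B. dist (G T) M < e" if e0: "e > 0" for e
  proof -
    have "(f has_integral M) {0..}" using fint Mdef by (simp add: has_integral_integral)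
    then have H: "\<forall>e>0. \<exists>B>0. \<forall>a b. ball 0 B \<subseteq> cbox a b \<longrightarrow>
          (\<exists>z. ((\<lambda>x. if x \<in> {0..} then f x else 0) has_integral z) (cbox a b) \<and> norm (z - M) < e)"
      by (rule has_integral'[THEN iffD1])
    obtain B where B: "B > 0" and
      hB: "\<forall>a b. ball 0 B \<subseteq> cbox a b \<longrightarrow>
          (\<exists>z. ((\<lambda>x. if x \<in> {0..} then f x else 0) has_integral z) (cbox a b) \<and> norm (z - M) < e)"
      using H[rule_format, OF e0] by (elim exE conjE) (rule that)
    have "dist (G T) M < e" if BT: "B \<le> T" for T
    proof -
      obtain z where z: "((\<lambda>x. if x \<in> {0..} then f x else 0) has_integral z) (cbox (-T) T)"
        "norm (z - M) < e" using hB[rule_format, OF ball_sub[OF BT]] by (elim exE conjE) (rule that)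
      have eqs: "{0..} \<inter> cbox (-T) T = {0..T}" using BT B unfolding cbox_interval by force
      have "(f has_integral z) ({0..} \<inter> cbox (-T) T)"
        using z(1) by (simp only: has_integral_restrict_Int)
      then have "(f has_integral z) {0..T}" unfolding eqs .
      then have "z = G T" unfolding G_def by (simp add: integral_unique)
      then show ?thesis using z(2) by (simp add: dist_norm)
    qed
    then show ?thesis by blast
  qed
  have "(G \<longlongrightarrow> M) at_top"
    unfolding tendsto_iff eventually_at_top_linorder using Glim by blast
  then have tQG: "((\<lambda>T. Q ** G T) \<longlongrightarrow> Q ** M) at_top"
    by (rule bounded_linear.tendsto[OF bl_mm])
  have evQG: "eventually (\<lambda>T. Q ** G T = E T - mat 1) at_top"
    unfolding eventually_at_top_linorder using QG by blast
  have "((\<lambda>T. E T - mat 1) \<longlongrightarrow> Q ** M) at_top"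
    using tendsto_cong[OF evQG] tQG by simp
  then have "((\<lambda>T. (E T - mat 1) + (mat 1 - P)) \<longlongrightarrow> Q ** M + (mat 1 - P)) at_top"
    by (intro tendsto_add tendsto_const)
  then have flim: "(f \<longlongrightarrow> Q ** M + (mat 1 - P)) at_top"
    by (simp add: f_def)
  define K where "K = Q ** M + (mat 1 - P)"
  have "norm K < e" if "e > 0" for e
  proof -
    have "eventually (\<lambda>s. dist (f s) K < e/2) at_top"
      using tendsto_iff[THEN iffD1, OF flim[folded K_def], rule_format, of "e/2"] that by simp
    then obtain N1 where N1: "\<And>s. s \<ge> N1 \<Longrightarrow> dist (f s) K < e/2"
      unfolding eventually_at_top_linorder by blast
    obtain N2 where N2: "\<And>T. T \<ge> N2 \<Longrightarrow> dist (G T) M < e/4"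
      using Glim[of "e/4"] \<open>e > 0\<close> by auto
    define T where "T = max (max N1 N2) 0"
    have T: "T \<ge> N1" "T \<ge> N2" "T \<ge> 0" unfolding T_def by auto
    have "G T + integral {T..T+1} f = G (T + 1)"
      unfolding G_def by (rule Henstock_Kurzweil_Integration.integral_combine) (use T fintT in auto)
    have hint: "((\<lambda>s. f s - K) has_integral (integral {T..T+1} f - K)) (cbox T (T+1))"
      using has_integral_diff[OF integrable_integral[OF fintT[OF T(3)]] has_integral_const_real[of K T "T+1"]]
      by (simp add: cbox_interval)
    have "norm (integral {T..T+1} f - K) \<le> e/2 * Henstock_Kurzweil_Integration.content (cbox T (T+1))"
      by (rule has_integral_bound[OF _ hint]) (use N1 T \<open>e>0\<close> in \<open>auto simp: dist_norm cbox_interval less_imp_le\<close>)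
    then have i1: "norm (integral {T..T+1} f - K) \<le> e/2" by (simp add: cbox_interval)
    have "K = (G (T+1) - M) - (G T - M) - (integral {T..T+1} f - K)"
      using \<open>G T + integral {T..T+1} f = G (T + 1)\<close> by (simp add: algebra_simps)
    then have "norm K \<le> norm (G (T+1) - M) + norm (G T - M) + norm (integral {T..T+1} f - K)"
      using order_trans[OF norm_triangle_ineq4 add_right_mono[OF norm_triangle_ineq4]] by metis
    also have "\<dots> < e/4 + e/4 + e/2"
      using N2[of T] N2[of "T+1"] T i1 by (intro add_less_le_mono add_strict_mono) (auto simp: dist_norm)
    finally show ?thesis by simp
  qed
  then have "\<not> norm K > 0" by (meson less_irrefl)
  then have "K = 0" by simp
  then show "Q ** devmat Q p = (\<chi> i j. p $ j) - mat 1"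
    unfolding K_def M_def P_def by (simp add: algebra_simps eq_diff_eq)
qed

lemma dirichlet:
  fixes Q :: "real^'n^'n" and p y :: "real^'n"
  assumes gen: "generator Q" and pn: "\<And>i. p $ i \<ge> 0" and pQ: "p v* Q = 0"
  shows "(\<Sum>i\<in>UNIV. p $ i * (Q *v y) $ i * y $ i) \<le> 0"
proof -
  have rows: "(\<Sum>j\<in>UNIV. Q $ i $ j) = 0" for i using gen unfolding generator_def by blast
  have cols: "(\<Sum>i\<in>UNIV. Q $ i $ j * p $ i) = 0" for j
    using pQ by (simp add: vec_eq_iff vector_matrix_mult_def mult.commute)
  have t1: "(\<Sum>i\<in>UNIV. \<Sum>j\<in>UNIV. p $ i * Q $ i $ j * (y $ i)\<^sup>2) = 0"
    by (simp add: sum_distrib_left[symmetric] sum_distrib_right[symmetric] rows mult.commute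
        mult.left_commute)
  have t3: "(\<Sum>i\<in>UNIV. \<Sum>j\<in>UNIV. p $ i * Q $ i $ j * (y $ j)\<^sup>2) = 0"
  proof -
    have "(\<Sum>i\<in>UNIV. \<Sum>j\<in>UNIV. p $ i * Q $ i $ j * (y $ j)\<^sup>2) = (\<Sum>j\<in>UNIV. \<Sum>i\<in>UNIV. p $ i * Q $ i $ j * (y $ j)\<^sup>2)"
      by (rule sum.swap)
    also have "\<dots> = (\<Sum>j\<in>UNIV. (y $ j)\<^sup>2 * (\<Sum>i\<in>UNIV. Q $ i $ j * p $ i))"
      by (intro sum.cong refl) (simp add: sum_distrib_left mult_ac)
    also have "\<dots> = 0" by (simp add: cols)
    finally show ?thesis .
  qed
  have "(\<Sum>i\<in>UNIV. \<Sum>j\<in>UNIV. p $ i * Q $ i $ j * (y $ i - y $ j)\<^sup>2)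
      = (\<Sum>i\<in>UNIV. \<Sum>j\<in>UNIV. p $ i * Q $ i $ j * (y $ i)\<^sup>2)
        - 2 * (\<Sum>i\<in>UNIV. \<Sum>j\<in>UNIV. p $ i * Q $ i $ j * y $ i * y $ j)
        + (\<Sum>i\<in>UNIV. \<Sum>j\<in>UNIV. p $ i * Q $ i $ j * (y $ j)\<^sup>2)"
    by (simp add: power2_diff sum.distrib sum_subtractf sum_distrib_left algebra_simps)
  also have "\<dots> = - 2 * (\<Sum>i\<in>UNIV. \<Sum>j\<in>UNIV. p $ i * Q $ i $ j * y $ i * y $ j)"
    by (simp only: t1 t3)
  also have "\<dots> = - 2 * (\<Sum>i\<in>UNIV. p $ i * (Q *v y) $ i * y $ i)"
    by (simp add: matrix_vector_mult_def sum_distrib_left sum_distrib_right mult_ac)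
  finally have eq: "(\<Sum>i\<in>UNIV. \<Sum>j\<in>UNIV. p $ i * Q $ i $ j * (y $ i - y $ j)\<^sup>2)
      = - 2 * (\<Sum>i\<in>UNIV. p $ i * (Q *v y) $ i * y $ i)" .
  have "0 \<le> (\<Sum>i\<in>UNIV. \<Sum>j\<in>UNIV. p $ i * Q $ i $ j * (y $ i - y $ j)\<^sup>2)"
  proof (intro sum_nonneg)
    fix i j
    show "0 \<le> p $ i * Q $ i $ j * (y $ i - y $ j)\<^sup>2"
    proof (cases "i = j")
      case False
      then have "Q $ i $ j \<ge> 0" using gen unfolding generator_def by blast
      then show ?thesis using pn[of i] by simp
    qed simp
  qed
  then show ?thesis using eq by linarith
qed

lemma core:
  fixes Q M :: "real^'n^'n" and p x :: "real^'n"
  assumes gen: "generator Q" and pn: "\<And>i. p $ i \<ge> 0" and pQ: "p v* Q = 0"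
    and p1: "p \<bullet> ones = 1" and pM: "p v* M = 0" and M1: "M *v ones = 0"
    and QM: "Q ** M = (\<chi> i j. p $ j) - mat 1"
  shows "(\<Sum>i\<in>UNIV. p $ i * x $ i * (M *v x) $ i) \<ge> 0"
proof -
  define y where "y = M *v x"
  define c where "c = p \<bullet> x"
  define xt where "xt = x - c *\<^sub>R ones"
  have "M *v xt = M *v x - c *\<^sub>R (M *v ones)"
    unfolding xt_def by (simp add: matrix_vector_mult_diff_distrib matrix_vector_mult_scaleR)
  then have Mxt: "M *v xt = y" using M1 by (simp add: y_def)
  have pxt: "p \<bullet> xt = 0" unfolding xt_def c_def using p1 by (simp add: inner_diff_right)
  have "Q *v y = (Q ** M) *v xt" using Mxt by (simp add: matrix_vector_mul_assoc[symmetric])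
  also have "\<dots> = (\<chi> i j. p $ j) *v xt - xt" unfolding QM
    by (simp add: matrix_vector_mult_diff_rdistrib)
  also have "(\<chi> i j. p $ j) *v xt = (p \<bullet> xt) *\<^sub>R ones"
    by (simp add: vec_eq_iff matrix_vector_mult_def inner_vec_def ones_def mult.commute)
  finally have Qy: "Q *v y = - xt" using pxt by simp
  have py: "(\<Sum>i\<in>UNIV. p $ i * y $ i) = 0"
  proof -
    have "(\<Sum>i\<in>UNIV. p $ i * y $ i) = p \<bullet> (M *v x)" by (simp add: y_def inner_vec_def)
    also have "\<dots> = (p v* M) \<bullet> x" by (simp add: dot_lmul_matrix)
    finally show ?thesis using pM by simp
  qed
  have "(\<Sum>i\<in>UNIV. p $ i * x $ i * y $ i) = (\<Sum>i\<in>UNIV. p $ i * xt $ i * y $ i) + c * (\<Sum>i\<in>UNIV. p $ i * y $ i)"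
    by (simp add: xt_def ones_def algebra_simps sum.distrib sum_distrib_left sum_subtractf)
  also have "\<dots> = - (\<Sum>i\<in>UNIV. p $ i * (Q *v y) $ i * y $ i)"
    by (simp add: py Qy sum_negf[symmetric])
  finally show ?thesis using dirichlet[OF gen pn pQ, of y] by (simp add: y_def)
qed

lemma pi_nonneg:
  fixes Q :: "real^'n^'n" and p :: "real^'n"
  assumes gen: "generator Q" and irr: "irreducible_gen Q" and pQ: "p v* Q = 0"
    and p1: "p \<bullet> ones = 1"
  shows "p $ i \<ge> 0"
proof (rule ccontr)
  assume neg: "\<not> p $ i \<ge> 0"
  define N where "N = {i. p $ i < 0}"
  have rows: "(\<Sum>j\<in>UNIV. Q $ i $ j) = 0" for i using gen unfolding generator_def by blast
  have offd: "a \<noteq> b \<Longrightarrow> Q $ a $ b \<ge> 0" for a b using gen unfolding generator_def by blast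
  define t where "t = (\<lambda>i. p $ i * (\<Sum>j\<in>N. Q $ i $ j))"
  have split: "(\<Sum>j\<in>N. Q $ a $ j) = - (\<Sum>j\<in>UNIV - N. Q $ a $ j)" for a
    using sum.subset_diff[of N UNIV "\<lambda>j. Q $ a $ j"] rows[of a] by simp
  have tsum: "(\<Sum>a\<in>UNIV. t a) = 0"
  proof -
    have "(\<Sum>a\<in>UNIV. t a) = (\<Sum>j\<in>N. \<Sum>a\<in>UNIV. Q $ a $ j * p $ a)"
      unfolding t_def by (subst sum.swap) (simp add: sum_distrib_left mult.commute)
    also have "\<dots> = (\<Sum>j\<in>N. (p v* Q) $ j)" by (simp add: vector_matrix_mult_def mult.commute)
    finally show ?thesis using pQ by simp
  qed
  have tnn: "t a \<ge> 0" for a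
  proof (cases "a \<in> N")
    case True
    have "(\<Sum>j\<in>UNIV - N. Q $ a $ j) \<ge> 0"
      using True by (intro sum_nonneg offd) auto
    then show ?thesis using True unfolding t_def split by (simp add: N_def mult_nonpos_nonneg)
  next
    case False
    have "(\<Sum>j\<in>N. Q $ a $ j) \<ge> 0"
      using False by (intro sum_nonneg offd) auto
    then show ?thesis using False unfolding t_def by (simp add: N_def)
  qed
  have "\<forall>x\<in>UNIV. t x = 0"
    using sum_nonneg_eq_0_iff[of UNIV t] tsum tnn by simp
  then have t0: "t a = 0" for a by simp
  have noedge: "Q $ a $ b = 0" if "a \<in> N" "b \<notin> N" for a b
  proof -
    have "p $ a * (\<Sum>j\<in>UNIV - N. Q $ a $ j) = 0"
      using t0[of a] unfolding t_def split by simp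
    then have s0: "(\<Sum>j\<in>UNIV - N. Q $ a $ j) = 0" using that(1) by (simp add: N_def)
    have nn: "\<forall>j\<in>UNIV - N. 0 \<le> Q $ a $ j"
    proof
      fix j assume "j \<in> UNIV - N"
      then have "a \<noteq> j" using that(1) by blast
      then show "0 \<le> Q $ a $ j" by (rule offd)
    qed
    have "\<forall>j\<in>UNIV - N. Q $ a $ j = 0"
      using sum_nonneg_eq_0_iff[of "UNIV - N" "\<lambda>j. Q $ a $ j"] s0 nn by simp
    then show ?thesis using that by auto
  qed
  have reach: "(a, b) \<in> {(a, b). a \<noteq> b \<and> Q $ a $ b > 0}\<^sup>* \<Longrightarrow> a \<in> N \<Longrightarrow> b \<in> N" for a b
  proof (induction rule: rtrancl_induct)
    case base then show ?case by simp
  next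
    case (step b c)
    then have bN: "b \<in> N" and bc: "Q $ b $ c > 0" by auto
    show ?case
    proof (rule ccontr)
      assume "c \<notin> N"
      then have "Q $ b $ c = 0" using noedge[OF bN] by blast
      then show False using bc by simp
    qed
  qed
  have iN: "i \<in> N" using neg by (simp add: N_def)
  have allN: "j \<in> N" for j using reach[OF _ iN] irr unfolding irreducible_gen_def by blast
  have "(\<Sum>j\<in>UNIV. - p $ j) > 0"
    by (rule sum_pos) (use allN in \<open>auto simp: N_def\<close>)
  then have "(\<Sum>j\<in>UNIV. p $ j) < 0" by (simp add: sum_negf)
  moreover have "(\<Sum>j\<in>UNIV. p $ j) = 1" using p1 by (simp add: inner_vec_def ones_def)
  ultimately show False by simp
qed

lemma diag_vm: "diagonal_mat A \<Longrightarrow> p v* A = (\<chi> j. p $ j * A $ j $ j)"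
proof -
  assume d: "diagonal_mat A"
  have "(\<Sum>i\<in>UNIV. A $ i $ j * p $ i) = (\<Sum>i\<in>UNIV. if i = j then p $ j * A $ j $ j else 0)" for j
    by (rule sum.cong[OF refl]) (use d in \<open>auto simp: diagonal_mat_def\<close>)
  then show ?thesis by (simp add: vec_eq_iff vector_matrix_mult_def mult.commute)
qed

lemma diag_mv: "diagonal_mat A \<Longrightarrow> A *v ones = (\<chi> i. A $ i $ i)"
proof -
  assume d: "diagonal_mat A"
  have "(\<Sum>j\<in>UNIV. A $ i $ j * ones $ j) = (\<Sum>j\<in>UNIV. if j = i then A $ i $ i else 0)" for i
    by (rule sum.cong[OF refl]) (use d in \<open>auto simp: diagonal_mat_def ones_def\<close>)
  then show ?thesis by (simp add: vec_eq_iff matrix_vector_mult_def)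
qed

lemma quad_form:
  "(p v* (A ** M ** B)) \<bullet> ones = (p v* A) \<bullet> (M *v (B *v ones))"
  by (simp add: vector_matrix_mul_assoc[symmetric] dot_lmul_matrix)

theorem proposition1:
  fixes C D :: "real^'n^'n" and pi :: "real^'n"
  assumes "is_MAP C D"
    and "diagonal_mat D \<or> diagonal_mat C"
    and "pi v* (C + D) = 0"
    and "pi \<bullet> ones = 1"
  shows "(pi v* (D ** devmat (C + D) pi ** D)) \<bullet> ones \<ge> 0"
proof -
  define Q where "Q = C + D"
  have gen: "generator Q" and irr: "irreducible_gen Q"
    using assms(1) unfolding is_MAP_def Q_def by auto
  have pQ: "pi v* Q = 0" using assms(3) Q_def by simp
  have p1: "pi \<bullet> ones = 1" by fact
  have Q1: "Q *v ones = 0"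
    using gen unfolding generator_def by (simp add: vec_eq_iff matrix_vector_mult_def ones_def)
  have pn: "\<And>i. pi $ i \<ge> 0" using pi_nonneg[OF gen irr pQ p1] .
  show ?thesis
  proof (cases "(\<lambda>u. mexp (u *\<^sub>R Q) - (\<chi> i j. pi $ j)) integrable_on {0..}")
    case False
    then have "devmat Q pi = 0" unfolding devmat_def by (simp add: not_integrable_integral)
    then show ?thesis unfolding Q_def[symmetric] by (simp add: vector_matrix_mult_def zero_vec_def[symmetric])
  next
    case True
    note props = devmat_props[OF Q1 pQ p1 True]
    define M where "M = devmat Q pi"
    have key: "(\<Sum>i\<in>UNIV. pi $ i * x $ i * (M *v x) $ i) \<ge> 0" for x
      using core[OF gen pn pQ p1 props[folded M_def]] .
    have eq: "(pi v* (D ** M ** D)) \<bullet> ones = (pi v* D) \<bullet> (M *v (D *v ones))"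
      by (rule quad_form)
    from assms(2) show ?thesis
    proof
      assume dD: "diagonal_mat D"
      have "(pi v* D) \<bullet> (M *v (D *v ones)) = (\<Sum>i\<in>UNIV. pi $ i * (\<chi> i. D $ i $ i) $ i * (M *v (\<chi> i. D $ i $ i)) $ i)"
        by (simp add: diag_vm[OF dD] diag_mv[OF dD] inner_vec_def)
      then show ?thesis using key[of "\<chi> i. D $ i $ i"] eq unfolding M_def Q_def by (simp only:)
    next
      assume dC: "diagonal_mat C"
      define c where "c = (\<chi> i. C $ i $ i)"
      have D1: "D *v ones = - c"
        using Q1 diag_mv[OF dC] unfolding Q_def c_def
        by (simp add: matrix_vector_mult_add_rdistrib eq_neg_iff_add_eq_0 add.commute)
      have pD: "pi v* D = - (\<chi> j. pi $ j * c $ j)"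
      proof -
        have "pi v* Q = pi v* C + pi v* D"
          unfolding Q_def by (simp add: vec_eq_iff vector_matrix_mult_def sum.distrib algebra_simps)
        then show ?thesis using pQ diag_vm[OF dC] unfolding c_def
          by (simp add: eq_neg_iff_add_eq_0 add.commute)
      qed
      have "M *v (- c) = - (M *v c)" by (simp add: vec_eq_iff matrix_vector_mult_def sum_negf)
      then have "(pi v* D) \<bullet> (M *v (D *v ones)) = (\<Sum>i\<in>UNIV. pi $ i * c $ i * (M *v c) $ i)"
        by (simp add: pD D1 inner_vec_def)
      then show ?thesis using key eq unfolding M_def Q_def by simp
    qed
  qed
qed

end
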